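(* Let $F$ be a smoothed envelope distribution in $\mathrm{MDA}(\gamma)$ with $\gamma\ge0$ and unbounded support, let $G$ be a distribution on $\mathbb N_+$ with $\overline G\le\overline F$, let $X\sim G$, and for $u\ge1$ define $$\Sigma(u)=\mathbb E\big[\mathbb I\{X>u\}\log(1+X-u)\big].$$ Then for every $\epsilon>0$ there exists $t_0$ (depending on $\epsilon$ and $F$) such that for all $t>t_0$ and all $u\ge 1$, $$\Sigma(u)\le \overline G(u)\log t+\Big(\frac{\gamma}{\ln 2}+\epsilon\Big)\overline F(t).$$
   Context: $\log$ is base 2 and $\ln$ is natural log. A smoothed envelope distribution is a c.d.f. $F$ on $\mathbb R_+$ with continuous derivative; $\overline F=1-F$, $\overline G=1-G$, $U(t)=\overline F^{-1}(1/t)$, and $F\in\mathrm{MDA}(\gamma)$ means there exist $A_n>0$ with $F^n(A_nx+U(n))\to\exp(-(1+\gamma x)^{-1/\gamma})$ (interpreted as $\exp(-e^{-x})$ when $\gamma=0$) for all $x$ with $1+\gamma x>0$. ($\overline G\le\overline F$ holds when $G$ is the marginal of a source in the envelope class defined by $F$.) *)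

theory Defs
  imports "HOL-Probability.Probability"
begin

definition smoothed_envelope :: "(real \<Rightarrow> real) \<Rightarrow> bool" where
  "smoothed_envelope F \<longleftrightarrow>
     mono F \<and> (\<forall>x<0. F x = 0) \<and> (F \<longlongrightarrow> 1) at_top \<and> continuous_on UNIV F \<and>
     (\<exists>f. continuous_on {0<..} f \<and> (\<forall>x>0. (F has_real_derivative f x) (at x)))"

definition tailinv :: "(real \<Rightarrow> real) \<Rightarrow> real \<Rightarrow> real" where
  "tailinv F t = Inf {x. F x \<ge> 1 - 1 / t}"

definition gev :: "real \<Rightarrow> real \<Rightarrow> real" where
  "gev \<gamma> x = (if \<gamma> = 0 then exp (- exp (- x)) else exp (- ((1 + \<gamma> * x) powr (- 1 / \<gamma>))))"

definition MDA :: "(real \<Rightarrow> real) \<Rightarrow> real \<Rightarrow> bool" where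
  "MDA F \<gamma> \<longleftrightarrow> (\<exists>A :: nat \<Rightarrow> real. (\<forall>n. A n > 0) \<and>
     (\<forall>x. 1 + \<gamma> * x > 0 \<longrightarrow>
        (\<lambda>n. (F (A n * x + tailinv F (real n))) ^ n) \<longlonglongrightarrow> gev \<gamma> x))"

end

theory Submission
  imports Defs
begin


definition hh :: "real \<Rightarrow> real \<Rightarrow> real" where
  "hh \<gamma> x = (if \<gamma> = 0 then exp (- x) else (1 + \<gamma> * x) powr (- 1 / \<gamma>))"

lemma gev_hh: "gev \<gamma> x = exp (- hh \<gamma> x)"
  by (simp add: gev_def hh_def)

lemma hh_pos: "1 + \<gamma> * x > 0 \<Longrightarrow> hh \<gamma> x > 0"
  by (simp add: hh_def)

locale env =
  fixes F :: "real \<Rightarrow> real"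
  assumes mono: "mono F" and neg: "\<And>x. x < 0 \<Longrightarrow> F x = 0" and lim1: "(F \<longlongrightarrow> 1) at_top"
    and cont: "continuous_on UNIV F" and lt1: "\<And>x. F x < 1"
begin

lemma F_nonneg: "F x \<ge> 0"
proof -
  have "F (min x (-1)) \<le> F x" by (rule monoD[OF mono]) simp
  moreover have "F (min x (-1)) = 0" by (rule neg) simp
  ultimately show ?thesis by simp
qed

lemma S_ne: "r > 1 \<Longrightarrow> {x. F x \<ge> 1 - 1/r} \<noteq> {}"
proof -
  assume r: "r > 1"
  have "eventually (\<lambda>x. F x > 1 - 1/r) at_top"
    using lim1 r by (intro order_tendstoD) auto
  then obtain x where "F x > 1 - 1/r" by (metis eventually_happens' trivial_limit_at_top_linorder)
  hence "x \<in> {x. F x \<ge> 1 - 1/r}" by simp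
  thus ?thesis by blast
qed

lemma S_bdd: "r > 1 \<Longrightarrow> bdd_below {x. F x \<ge> 1 - 1/r}"
proof -
  assume r: "r > 1"
  have "\<forall>x\<in>{x. F x \<ge> 1 - 1/r}. 0 \<le> x"
  proof
    fix x assume "x \<in> {x. F x \<ge> 1 - 1/r}"
    hence "F x \<ge> 1 - 1/r" by simp
    moreover have "1 - 1/r > 0" using r by simp
    ultimately show "0 \<le> x" using neg[of x] by force
  qed
  thus ?thesis by (auto simp: bdd_below_def)
qed

lemma U_nonneg: "r > 1 \<Longrightarrow> tailinv F r \<ge> 0"
  unfolding tailinv_def
proof (rule cInf_greatest)
  assume r: "r > 1"
  show "{x. F x \<ge> 1 - 1/r} \<noteq> {}" using S_ne[OF r] .
  fix x assume "x \<in> {x. F x \<ge> 1 - 1/r}"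
  hence "F x \<ge> 1 - 1/r" by simp
  moreover have "1 - 1/r > 0" using r by simp
  ultimately show "0 \<le> x" using neg[of x] by force
qed

lemma U_in: "r > 1 \<Longrightarrow> F (tailinv F r) \<ge> 1 - 1/r"
proof -
  assume r: "r > 1"
  have c: "closed {x. F x \<ge> 1 - 1/r}"
    by (rule closed_Collect_le[OF continuous_on_const cont])
  have "Inf {x. F x \<ge> 1 - 1/r} \<in> {x. F x \<ge> 1 - 1/r}"
    by (rule closed_contains_Inf[OF S_ne[OF r] S_bdd[OF r] c])
  thus ?thesis by (simp add: tailinv_def)
qed

lemma U_le: "r > 1 \<Longrightarrow> F z \<ge> 1 - 1/r \<Longrightarrow> tailinv F r \<le> z"
  unfolding tailinv_def by (rule cInf_lower) (simp_all add: S_bdd)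

lemma U_ge: "r > 1 \<Longrightarrow> F z < 1 - 1/r \<Longrightarrow> z \<le> tailinv F r"
  unfolding tailinv_def
proof (rule cInf_greatest)
  assume r: "r > 1" and z: "F z < 1 - 1/r"
  show "{x. F x \<ge> 1 - 1/r} \<noteq> {}" using S_ne[OF r] .
  fix x assume "x \<in> {x. F x \<ge> 1 - 1/r}"
  hence "F x \<ge> 1 - 1/r" by simp
  show "z \<le> x"
  proof (rule ccontr)
    assume "\<not> z \<le> x" hence "F x \<le> F z" using monoD[OF mono, of x z] by simp
    thus False using z \<open>F x \<ge> 1 - 1/r\<close> by simp
  qed
qed


lemma ev_common:
  assumes b: "filterlim b at_top G" and rho: "((\<lambda>y. \<rho> y / real (b y)) \<longlongrightarrow> \<kappa>) G" and k: "\<kappa> > 0"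
  shows "eventually (\<lambda>y. b y \<ge> 1 \<and> \<rho> y > 1) G"
proof -
  have rb: "filterlim (\<lambda>y. real (b y)) at_top G"
    by (rule filterlim_compose[OF filterlim_real_sequentially b])
  have e1: "eventually (\<lambda>y. real (b y) > 2 / \<kappa>) G"
    using rb by (simp add: filterlim_at_top_dense)
  have e2: "eventually (\<lambda>y. \<rho> y / real (b y) > \<kappa> / 2) G"
    using rho k by (intro order_tendstoD(1)) auto
  have e3: "eventually (\<lambda>y. b y \<ge> 1) G"
    using b by (simp add: filterlim_at_top)
  show ?thesis
  proof (rule eventually_mono[OF eventually_conj[OF e1 eventually_conj[OF e2 e3]]])
    fix y assume h: "real (b y) > 2 / \<kappa> \<and> \<rho> y / real (b y) > \<kappa> / 2 \<and> b y \<ge> 1"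
    have bp: "real (b y) > 0" using h by simp
    have "\<rho> y > \<kappa> / 2 * real (b y)" using h bp by (simp add: field_simps)
    moreover have "\<kappa> / 2 * real (b y) > \<kappa> / 2 * (2 / \<kappa>)"
      using h k by (intro mult_strict_left_mono) auto
    ultimately show "b y \<ge> 1 \<and> \<rho> y > 1" using h k by simp
  qed
qed

lemma L_upper:
  assumes limA: "\<And>x. 1 + \<gamma> * x > 0 \<Longrightarrow> (\<lambda>n. F (A n * x + tailinv F (real n)) ^ n) \<longlonglongrightarrow> gev \<gamma> x"
    and b: "filterlim b at_top G" and rho: "((\<lambda>y. \<rho> y / real (b y)) \<longlongrightarrow> \<kappa>) G"
    and k: "\<kappa> > 0" and x: "1 + \<gamma> * x > 0" and hk: "\<kappa> * hh \<gamma> x < 1"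
  shows "eventually (\<lambda>y. tailinv F (\<rho> y) \<le> A (b y) * x + tailinv F (real (b y))) G"
proof -
  define z where "z y = A (b y) * x + tailinv F (real (b y))" for y
  define P where "P y = F (z y) ^ b y" for y
  have P: "(P \<longlongrightarrow> exp (- hh \<gamma> x)) G"
    unfolding P_def z_def using filterlim_compose[OF limA[OF x] b] by (simp add: gev_hh)
  have L: "((\<lambda>y. - ln (P y)) \<longlongrightarrow> hh \<gamma> x) G"
    using tendsto_minus[OF tendsto_ln[OF P]] by simp
  have r: "((\<lambda>y. real (b y) / \<rho> y) \<longlongrightarrow> 1 / \<kappa>) G"
    using tendsto_inverse[OF rho] k by (simp add: inverse_eq_divide)
  have "hh \<gamma> x < 1 / \<kappa>" using hk k by (simp add: field_simps)
  hence e1: "eventually (\<lambda>y. real (b y) / \<rho> y - (- ln (P y)) > 0) G"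
    using tendsto_diff[OF r L] by (intro order_tendstoD(1)) auto
  have e2: "eventually (\<lambda>y. P y > 0) G"
    using P by (intro order_tendstoD(1)) auto
  show ?thesis
  proof (rule eventually_mono[OF eventually_conj[OF e1 eventually_conj[OF e2 ev_common[OF b rho k]]]])
    fix y assume h: "real (b y) / \<rho> y - (- ln (P y)) > 0 \<and> P y > 0 \<and> b y \<ge> 1 \<and> \<rho> y > 1"
    have Fz0: "F (z y) > 0"
    proof -
      have "F (z y) \<noteq> 0" using h by (auto simp: P_def power_0_left split: if_splits)
      thus ?thesis using F_nonneg[of "z y"] by simp
    qed
    have lnP: "ln (P y) = real (b y) * ln (F (z y))" by (simp add: P_def ln_realpow)
    have "1 - F (z y) \<le> - ln (F (z y))" using ln_le_minus_one[OF Fz0] by simp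
    hence "real (b y) * (1 - F (z y)) \<le> real (b y) * (- ln (F (z y)))"
      by (intro mult_left_mono) auto
    also have "\<dots> = - ln (P y)" using lnP by simp
    also have "\<dots> < real (b y) / \<rho> y" using h by simp
    finally have "real (b y) * (1 - F (z y)) < real (b y) * (1 / \<rho> y)" by simp
    moreover have "real (b y) > 0" using h by simp
    ultimately have "1 - F (z y) < 1 / \<rho> y" by (simp only: mult_less_cancel_left_pos)
    hence "F (z y) \<ge> 1 - 1 / \<rho> y" by simp
    thus "tailinv F (\<rho> y) \<le> A (b y) * x + tailinv F (real (b y))"
      using U_le[of "\<rho> y" "z y"] h by (simp add: z_def)
  qed
qed

lemma L_lower:
  assumes limA: "\<And>x. 1 + \<gamma> * x > 0 \<Longrightarrow> (\<lambda>n. F (A n * x + tailinv F (real n)) ^ n) \<longlonglongrightarrow> gev \<gamma> x"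
    and b: "filterlim b at_top G" and rho: "((\<lambda>y. \<rho> y / real (b y)) \<longlongrightarrow> \<kappa>) G"
    and k: "\<kappa> > 0" and x: "1 + \<gamma> * x > 0" and hk: "\<kappa> * hh \<gamma> x > 1"
  shows "eventually (\<lambda>y. A (b y) * x + tailinv F (real (b y)) \<le> tailinv F (\<rho> y)) G"
proof -
  define z where "z y = A (b y) * x + tailinv F (real (b y))" for y
  define P where "P y = F (z y) ^ b y" for y
  have P: "(P \<longlongrightarrow> exp (- hh \<gamma> x)) G"
    unfolding P_def z_def using filterlim_compose[OF limA[OF x] b] by (simp add: gev_hh)
  have L: "((\<lambda>y. - ln (P y)) \<longlongrightarrow> hh \<gamma> x) G"
    using tendsto_minus[OF tendsto_ln[OF P]] by simp
  have r: "((\<lambda>y. real (b y) / \<rho> y) \<longlongrightarrow> 1 / \<kappa>) G"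
    using tendsto_inverse[OF rho] k by (simp add: inverse_eq_divide)
  have e2: "eventually (\<lambda>y. P y > 0) G"
    using P by (intro order_tendstoD(1)) auto
  have rb: "filterlim (\<lambda>y. real (b y)) at_top G"
    by (rule filterlim_compose[OF filterlim_real_sequentially b])
  have Ldiv: "((\<lambda>y. - ln (P y) / real (b y)) \<longlongrightarrow> hh \<gamma> x * 0) G"
    unfolding divide_inverse by (intro tendsto_mult L tendsto_inverse_0_at_top rb)
  have "((\<lambda>y. 1 - F (z y)) \<longlongrightarrow> 0) G"
  proof (rule tendsto_sandwich[of "\<lambda>y. 0" _ _ "\<lambda>y. - ln (P y) / real (b y)"])
    show "eventually (\<lambda>y. 0 \<le> 1 - F (z y)) G" using lt1 by (simp add: less_imp_le)
    show "eventually (\<lambda>y. 1 - F (z y) \<le> - ln (P y) / real (b y)) G"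
    proof (rule eventually_mono[OF eventually_conj[OF e2 ev_common[OF b rho k]]])
      fix y assume h: "P y > 0 \<and> b y \<ge> 1 \<and> \<rho> y > 1"
      have Fz0: "F (z y) > 0"
      proof -
        have "F (z y) \<noteq> 0" using h by (auto simp: P_def power_0_left split: if_splits)
        thus ?thesis using F_nonneg[of "z y"] by simp
      qed
      have lnP: "ln (P y) = real (b y) * ln (F (z y))" by (simp add: P_def ln_realpow)
      have "1 - F (z y) \<le> - ln (F (z y))" using ln_le_minus_one[OF Fz0] by simp
      also have "\<dots> = - ln (P y) / real (b y)" using lnP h by simp
      finally show "1 - F (z y) \<le> - ln (P y) / real (b y)" .
    qed
  qed (use Ldiv in simp_all)
  hence Fz1: "((\<lambda>y. F (z y)) \<longlongrightarrow> 1) G"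
    using tendsto_diff[OF tendsto_const[of 1], of "\<lambda>y. 1 - F (z y)" 0] by simp
  have "1 / \<kappa> < hh \<gamma> x" using hk k by (simp add: field_simps)
  hence e1: "eventually (\<lambda>y. F (z y) * (- ln (P y)) - real (b y) / \<rho> y > 0) G"
    using tendsto_diff[OF tendsto_mult[OF Fz1 L] r] by (intro order_tendstoD(1)) auto
  show ?thesis
  proof (rule eventually_mono[OF eventually_conj[OF e1 eventually_conj[OF e2 ev_common[OF b rho k]]]])
    fix y assume h: "F (z y) * (- ln (P y)) - real (b y) / \<rho> y > 0 \<and> P y > 0 \<and> b y \<ge> 1 \<and> \<rho> y > 1"
    have Fz0: "F (z y) > 0"
    proof -
      have "F (z y) \<noteq> 0" using h by (auto simp: P_def power_0_left split: if_splits)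
      thus ?thesis using F_nonneg[of "z y"] by simp
    qed
    have lnP: "ln (P y) = real (b y) * ln (F (z y))" by (simp add: P_def ln_realpow)
    have "ln (1 / F (z y)) \<le> 1 / F (z y) - 1" using ln_le_minus_one[of "1 / F (z y)"] Fz0 by simp
    hence "- ln (F (z y)) \<le> 1 / F (z y) - 1" using Fz0 by (simp add: ln_div)
    hence "F (z y) * (- ln (F (z y))) \<le> F (z y) * (1 / F (z y) - 1)"
      using Fz0 by (intro mult_left_mono) auto
    moreover have "F (z y) * (1 / F (z y) - 1) = 1 - F (z y)" using Fz0 by (simp add: right_diff_distrib)
    ultimately have key: "F (z y) * (- ln (F (z y))) \<le> 1 - F (z y)" by simp
    have "real (b y) * (1 / \<rho> y) = real (b y) / \<rho> y" by simp
    also have "\<dots> < F (z y) * (- ln (P y))" using h by simp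
    also have "\<dots> = real (b y) * (F (z y) * (- ln (F (z y))))" using lnP by simp
    also have "\<dots> \<le> real (b y) * (1 - F (z y))" using key by (intro mult_left_mono) auto
    finally have "real (b y) * (1 / \<rho> y) < real (b y) * (1 - F (z y))" .
    moreover have "real (b y) > 0" using h by simp
    ultimately have "1 / \<rho> y < 1 - F (z y)" by (simp only: mult_less_cancel_left_pos)
    hence "F (z y) < 1 - 1 / \<rho> y" by simp
    thus "A (b y) * x + tailinv F (real (b y)) \<le> tailinv F (\<rho> y)"
      using U_ge[of "\<rho> y" "z y"] h by (simp add: z_def)
  qed
qed


end

lemma b_props:
  fixes K :: real assumes K: "K > 0"
  shows "filterlim (\<lambda>r. nat \<lfloor>r / K\<rfloor>) sequentially at_top"
    and "((\<lambda>r. r / real (nat \<lfloor>r / K\<rfloor>)) \<longlongrightarrow> K) at_top"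
proof -
  have d: "filterlim (\<lambda>r::real. r / K) at_top at_top"
    using filterlim_tendsto_pos_mult_at_top[OF tendsto_const[of "1/K"] _ filterlim_ident] K
    by (simp add: field_simps)
  show "filterlim (\<lambda>r. nat \<lfloor>r / K\<rfloor>) sequentially at_top"
    by (rule filterlim_compose[OF filterlim_nat_sequentially filterlim_compose[OF filterlim_floor_sequentially d]])
  have q: "((\<lambda>r. real (nat \<lfloor>r / K\<rfloor>) / r) \<longlongrightarrow> 1 / K) at_top"
  proof (rule tendsto_sandwich[of "\<lambda>r. 1 / K - 1 / r" _ _ "\<lambda>r. 1 / K"])
    show "eventually (\<lambda>r. 1 / K - 1 / r \<le> real (nat \<lfloor>r / K\<rfloor>) / r) at_top"
      using eventually_gt_at_top[of 0]
    proof (rule eventually_mono)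
      fix r :: real assume r: "r > 0"
      have f0: "\<lfloor>r / K\<rfloor> \<ge> 0" using r K by simp
      have "real (nat \<lfloor>r / K\<rfloor>) = real_of_int \<lfloor>r / K\<rfloor>" using f0 by simp
      moreover have "r / K - 1 < real_of_int \<lfloor>r / K\<rfloor>" by (rule real_of_int_floor_gt_diff_one)
      ultimately have "r / K - 1 \<le> real (nat \<lfloor>r / K\<rfloor>)" by simp
      hence "(r / K - 1) / r \<le> real (nat \<lfloor>r / K\<rfloor>) / r" using r by (intro divide_right_mono) auto
      thus "1 / K - 1 / r \<le> real (nat \<lfloor>r / K\<rfloor>) / r" using r K by (simp add: field_simps)
    qed
    show "eventually (\<lambda>r. real (nat \<lfloor>r / K\<rfloor>) / r \<le> 1 / K) at_top"
      using eventually_gt_at_top[of 0]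
    proof (rule eventually_mono)
      fix r :: real assume r: "r > 0"
      have "real (nat \<lfloor>r / K\<rfloor>) \<le> r / K" using r K by simp
      hence "real (nat \<lfloor>r / K\<rfloor>) / r \<le> (r / K) / r" using r by (intro divide_right_mono) auto
      thus "real (nat \<lfloor>r / K\<rfloor>) / r \<le> 1 / K" using r K by simp
    qed
    show "((\<lambda>r. 1 / K - 1 / r) \<longlongrightarrow> 1 / K) at_top"
      using tendsto_diff[OF tendsto_const[of "1/K"] tendsto_divide_0[OF tendsto_const[of 1] filterlim_at_top_imp_at_infinity[OF filterlim_ident]]]
      by simp
  qed simp
  have "((\<lambda>r. inverse (real (nat \<lfloor>r / K\<rfloor>) / r)) \<longlongrightarrow> inverse (1 / K)) at_top"
    using tendsto_inverse[OF q] K by simp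
  thus "((\<lambda>r. r / real (nat \<lfloor>r / K\<rfloor>)) \<longlongrightarrow> K) at_top" by simp
qed


context env begin

lemma U_ratio:
  assumes limA: "\<And>x. 1 + \<gamma> * x > 0 \<Longrightarrow> (\<lambda>n. F (A n * x + tailinv F (real n)) ^ n) \<longlonglongrightarrow> gev \<gamma> x"
    and Apos: "\<And>n. A n > 0" and g: "\<gamma> \<ge> 0" and k: "k > 1" and x1: "x1 > 0" and l: "l \<ge> 1"
    and hk: "k * hh \<gamma> (l * x1) < hh \<gamma> x1"
  shows "eventually (\<lambda>r. tailinv F (r * k) \<le> l * tailinv F r) at_top"
proof -
  define x2 where "x2 = l * x1"
  have d1: "1 + \<gamma> * x1 > 0" using g x1 by (simp add: add_pos_nonneg)
  have d2: "1 + \<gamma> * x2 > 0" using g x1 l unfolding x2_def by (simp add: add_pos_nonneg)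
  define h1 where "h1 = hh \<gamma> x1"
  define h2 where "h2 = hh \<gamma> x2"
  have h1p: "h1 > 0" using hh_pos[OF d1] h1_def by simp
  have h2p: "h2 > 0" using hh_pos[OF d2] h2_def by simp
  have hk': "k * h2 < h1" using hk by (simp add: h1_def h2_def x2_def)
  have lt: "1 / h1 < 1 / (k * h2)" using hk' h2p k h1p by (simp add: divide_strict_left_mono mult_pos_pos)
  define K where "K = (1 / h1 + 1 / (k * h2)) / 2"
  have avg: "a < (a + c) / 2 \<and> (a + c) / 2 < c" if "a < c" for a c :: real using that by simp
  have K1: "1 / h1 < K" and K2: "K < 1 / (k * h2)" using avg[OF lt] unfolding K_def by auto
  have Kp: "K > 0" using K1 h1p by (smt (verit) divide_pos_pos)
  have c1: "K * h1 > 1" using K1 h1p by (simp add: field_simps)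
  have c2: "(k * K) * h2 < 1" using K2 h2p k by (simp add: field_simps)
  define b where "b r = nat \<lfloor>r / K\<rfloor>" for r
  have b: "filterlim b sequentially at_top" unfolding b_def by (rule b_props(1)[OF Kp])
  have r1: "((\<lambda>r. r / real (b r)) \<longlongrightarrow> K) at_top" unfolding b_def by (rule b_props(2)[OF Kp])
  have r2: "((\<lambda>r. (r * k) / real (b r)) \<longlongrightarrow> k * K) at_top"
    using tendsto_mult[OF tendsto_const[of k] r1] by (simp add: field_simps)
  have e1: "eventually (\<lambda>r. A (b r) * x1 + tailinv F (real (b r)) \<le> tailinv F r) at_top"
    using L_lower[OF limA b _ Kp d1, of "\<lambda>r. r"] r1 c1 h1_def by simp
  have e2: "eventually (\<lambda>r. tailinv F (r * k) \<le> A (b r) * x2 + tailinv F (real (b r))) at_top"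
    using L_upper[OF limA b r2 _ d2] c2 h2_def Kp k by simp
  have e3: "eventually (\<lambda>r. b r \<ge> 2) at_top" using b by (simp add: filterlim_at_top)
  show ?thesis
  proof (rule eventually_mono[OF eventually_conj[OF e1 eventually_conj[OF e2 e3]]])
    fix r assume h: "A (b r) * x1 + tailinv F (real (b r)) \<le> tailinv F r \<and>
      tailinv F (r * k) \<le> A (b r) * x2 + tailinv F (real (b r)) \<and> b r \<ge> 2"
    have U0: "tailinv F (real (b r)) \<ge> 0" using h by (intro U_nonneg) simp
    have "A (b r) * x2 = l * (A (b r) * x1)" by (simp add: x2_def)
    also have "\<dots> \<le> l * (tailinv F r - tailinv F (real (b r)))" using h l by (intro mult_left_mono) auto
    finally have "tailinv F (r * k) \<le> l * (tailinv F r - tailinv F (real (b r))) + tailinv F (real (b r))"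
      using h by simp
    also have "\<dots> = l * tailinv F r - (l - 1) * tailinv F (real (b r))" by (simp add: algebra_simps)
    also have "\<dots> \<le> l * tailinv F r" using l U0 by simp
    finally show "tailinv F (r * k) \<le> l * tailinv F r" .
  qed
qed


lemma tail_ratio:
  assumes ev: "eventually (\<lambda>r. tailinv F (r * k) \<le> l * tailinv F r) at_top"
    and k: "k \<ge> 1" and l: "l > 0"
  shows "\<exists>s0. \<forall>s\<ge>s0. k * (1 - F (l * s)) \<le> 1 - F s"
proof -
  define R where "R s = inverse (1 - F s)" for s
  have t0: "((\<lambda>s. 1 - F s) \<longlongrightarrow> 0) at_top"
    using tendsto_diff[OF tendsto_const[of 1] lim1] by simp
  have R: "filterlim R at_top at_top" unfolding R_def
    by (rule filterlim_inverse_at_top[OF t0]) (use lt1 in simp)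
  have e1: "eventually (\<lambda>s. tailinv F (R s * k) \<le> l * tailinv F (R s)) at_top"
    using filterlim_iff[THEN iffD1, OF R, rule_format, OF ev] by simp
  have e2: "eventually (\<lambda>s. F s > 0) at_top"
    using lim1 by (intro order_tendstoD(1)) auto
  have "eventually (\<lambda>s. k * (1 - F (l * s)) \<le> 1 - F s) at_top"
  proof (rule eventually_mono[OF eventually_conj[OF e1 e2]])
    fix s assume h: "tailinv F (R s * k) \<le> l * tailinv F (R s) \<and> F s > 0"
    have q: "1 - F s > 0" using lt1[of s] by simp
    have R1: "R s > 1" using h q lt1[of s] by (simp add: R_def field_simps)
    have "R s * k \<ge> R s * 1" using k R1 by (intro mult_left_mono) auto
    hence Rk: "R s * k > 1" using R1 by linarith
    have FsR: "F s = 1 - 1 / R s" using q by (simp add: R_def inverse_eq_divide)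
    have "tailinv F (R s) \<le> s" by (rule U_le[OF R1]) (simp add: FsR)
    hence "l * tailinv F (R s) \<le> l * s" using l by (intro mult_left_mono) auto
    hence "tailinv F (R s * k) \<le> l * s" using h by simp
    hence "F (tailinv F (R s * k)) \<le> F (l * s)" by (rule monoD[OF mono])
    hence "1 - 1 / (R s * k) \<le> F (l * s)" using U_in[OF Rk] by simp
    hence "1 - F (l * s) \<le> 1 / (R s * k)" by simp
    hence "k * (1 - F (l * s)) \<le> k * (1 / (R s * k))" using k by (intro mult_left_mono) auto
    also have "\<dots> = 1 - F s" using k q by (simp add: R_def inverse_eq_divide)
    finally show "k * (1 - F (l * s)) \<le> 1 - F s" .
  qed
  thus ?thesis by (simp add: eventually_at_top_linorder)
qed

end

lemma hk_exists:
  fixes \<gamma> k l :: real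
  assumes g: "\<gamma> \<ge> 0" and k: "k > 1" and l1: "l > 1" and lk: "l > k powr \<gamma>"
  shows "\<exists>x1>0. k * hh \<gamma> (l * x1) < hh \<gamma> x1"
proof (cases "\<gamma> = 0")
  case True
  define x1 where "x1 = ln k / (l - 1) + 1"
  have lnk: "ln k > 0" using k by simp
  have "ln k / (l - 1) > 0" using lnk l1 by simp
  hence x1p: "x1 > 0" by (simp add: x1_def)
  have "(l - 1) * x1 = ln k + (l - 1)" using l1 by (simp add: x1_def distrib_left)
  hence "ln k < (l - 1) * x1" using l1 by simp
  hence "ln k - l * x1 < - x1" by (simp add: algebra_simps)
  hence "exp (ln k - l * x1) < exp (- x1)" by simp
  hence "k * exp (- (l * x1)) < exp (- x1)" using k by (simp add: exp_diff exp_minus field_simps)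
  thus ?thesis using x1p True by (auto simp: hh_def)
next
  case False
  hence gp: "\<gamma> > 0" using g by simp
  define q where "q = k powr \<gamma>"
  have qp: "q > 0" using k by (simp add: q_def)
  have lq: "l > q" using lk by (simp add: q_def)
  define x1 where "x1 = q / (\<gamma> * (l - q))"
  have x1p: "x1 > 0" using qp lq gp by (simp add: x1_def)
  define a where "a = 1 + \<gamma> * x1"
  define c where "c = 1 + \<gamma> * (l * x1)"
  have ap: "a > 0" using gp x1p by (simp add: a_def add_pos_pos)
  have "\<gamma> * x1 * (l - q) = q" using gp lq by (simp add: x1_def)
  hence "c = q * a + 1" by (simp add: c_def a_def algebra_simps)
  hence ca: "q * a < c" by simp
  have "c powr (- 1 / \<gamma>) < (q * a) powr (- 1 / \<gamma>)"
    by (rule powr_less_mono2_neg) (use gp qp ap ca in auto)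
  also have "\<dots> = q powr (- 1 / \<gamma>) * a powr (- 1 / \<gamma>)" using qp ap by (simp add: powr_mult)
  also have "q powr (- 1 / \<gamma>) = k powr (-1)" using gp k by (simp add: q_def powr_powr)
  also have "k powr (-1) = 1 / k" using k by (simp add: powr_minus divide_inverse)
  finally have "c powr (- 1 / \<gamma>) < a powr (- 1 / \<gamma>) / k" by simp
  hence "k * c powr (- 1 / \<gamma>) < a powr (- 1 / \<gamma>)" using k by (simp add: field_simps)
  thus ?thesis using x1p False by (auto simp: hh_def a_def c_def)
qed



lemma ptw_lemma:
  fixes t u l c L :: real and S :: "nat set" and T :: "nat \<Rightarrow> nat set" and j :: nat
  assumes t: "t > 1" and u: "u \<ge> 1" and l: "l > 1"
  and c_def: "c = log 2 l" and L_def: "L = log 2 t" and S_def: "S = {j::nat. real j > u}"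
  and T_def: "\<And>i. T i = {j::nat. real j > t * l ^ i}"
  shows "ennreal (if real j > u then log 2 (1 + real j - u) else 0) \<le> ennreal L * indicator S j + (\<Sum>i. ennreal c * indicator (T i) j)"
proof (cases "real j > u")
  case False
  thus ?thesis by simp
next
  case True
  have cp: "c > 0" using l by (simp add: c_def)
  have Lp: "L > 0" using t by (simp add: L_def)
  have j0: "real j > 0" using True u by simp
  have gj: "log 2 (1 + real j - u) \<le> log 2 (real j)" using True u j0 by simp
  have jS: "indicator S j = (1::ennreal)" using True by (simp add: S_def)
  have ge: "ennreal (if real j > u then log 2 (1 + real j - u) else 0) = ennreal (log 2 (1 + real j - u))"
    using True by simp
  show ?thesis
  proof (cases "real j \<le> t")
    case True
    hence "log 2 (real j) \<le> L" using j0 t unfolding L_def by simp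
    hence "log 2 (1 + real j - u) \<le> L" using gj by linarith
    hence "ennreal (log 2 (1 + real j - u)) \<le> ennreal L * indicator S j" using jS by (simp add: ennreal_leI)
    hence "ennreal (log 2 (1 + real j - u)) \<le> ennreal L * indicator S j + (\<Sum>i. ennreal c * indicator (T i) j)"
      by (rule add_increasing2[OF zero_le])
    thus ?thesis using ge by simp
  next
    case False
    have ex: "\<exists>n. real j / t < l ^ n" by (rule real_arch_pow[OF l])
    define N where "N = (LEAST n. real j \<le> t * l ^ n)"
    have exn: "\<exists>n. real j \<le> t * l ^ n"
    proof -
      obtain n where "real j / t < l ^ n" using ex by blast
      hence "real j < t * l ^ n" using t by (simp add: field_simps)
      thus ?thesis by (intro exI[of _ n]) simp
    qed
    have jN: "real j \<le> t * l ^ N" unfolding N_def by (rule LeastI_ex[OF exn])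
    have iN: "real j > t * l ^ i" if "i < N" for i
      using not_less_Least[OF that[unfolded N_def]] by simp
    have "log 2 (real j) \<le> log 2 (t * l ^ N)" using jN j0 by simp
    also have "\<dots> = L + real N * c" using t l by (simp add: L_def c_def log_mult log_nat_power)
    finally have "log 2 (1 + real j - u) \<le> L + real N * c" using gj by simp
    hence "ennreal (log 2 (1 + real j - u)) \<le> ennreal (L + real N * c)" by (rule ennreal_leI)
    also have "\<dots> = ennreal L * indicator S j + (\<Sum>i<N. ennreal c * indicator (T i) j)"
    proof -
      have "(\<Sum>i<N. ennreal c * indicator (T i) j) = (\<Sum>i<N. ennreal c)"
        by (rule sum.cong) (auto simp: T_def iN)
      also have "\<dots> = ennreal (real N * c)"
        by (simp add: ennreal_of_nat_eq_real_of_nat ennreal_mult' cp)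
      finally have e: "(\<Sum>i<N. ennreal c * indicator (T i) j) = ennreal (real N * c)" .
      have "ennreal (L + real N * c) = ennreal L + ennreal (real N * c)"
        using Lp cp by (intro ennreal_plus) auto
      thus ?thesis using jS e by simp
    qed
    also have "\<dots> \<le> ennreal L * indicator S j + (\<Sum>i. ennreal c * indicator (T i) j)"
      by (rule add_left_mono) (rule sum_le_suminf, auto)
    finally show ?thesis using ge by simp
  qed
qed


lemma expect_bound:
  fixes p :: "nat pmf" and Fb :: "real \<Rightarrow> real"
  assumes tail: "\<forall>x::real. measure_pmf.prob p {k. real k > x} \<le> Fb x"
    and t: "t > 1" and u: "u \<ge> 1" and l: "l > 1" and k: "k > 1"
    and geo: "\<And>i. Fb (t * l ^ i) \<le> Fb t * (1 / k) ^ i"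
  defines "g \<equiv> (\<lambda>j::nat. if real j > u then log 2 (1 + real j - u) else 0)"
  shows "integrable (measure_pmf p) g \<and>
     measure_pmf.expectation p g \<le> measure_pmf.prob p {j. real j > u} * log 2 t + (log 2 l * k / (k - 1)) * Fb t"
proof -
  define c where "c = log 2 l"
  define L where "L = log 2 t"
  define S where "S = {j::nat. real j > u}"
  define T where "T i = {j::nat. real j > t * l ^ i}" for i
  have cp: "c > 0" using l by (simp add: c_def)
  have Lp: "L > 0" using t by (simp add: L_def)
  have gnn: "g j \<ge> 0" for j using u by (simp add: g_def)
  have ptw: "ennreal (g j) \<le> ennreal L * indicator S j + (\<Sum>i. ennreal c * indicator (T i) j)" for j
    unfolding g_def by (rule ptw_lemma[OF t u l c_def L_def S_def T_def])
  have Fbt: "Fb t \<ge> 0"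
  proof -
    have "0 \<le> measure_pmf.prob p {j. real j > t}" by simp
    thus ?thesis using tail[rule_format, of t] by linarith
  qed
  have "(\<integral>\<^sup>+ j. ennreal (g j) \<partial>p) \<le> (\<integral>\<^sup>+ j. ennreal L * indicator S j + (\<Sum>i. ennreal c * indicator (T i) j) \<partial>p)"
    by (intro nn_integral_mono ptw)
  also have "\<dots> = ennreal L * emeasure p S + (\<Sum>i. ennreal c * emeasure p (T i))"
  proof -
    have a: "(\<integral>\<^sup>+ j. ennreal L * indicator S j + (\<Sum>i. ennreal c * indicator (T i) j) \<partial>p)
       = (\<integral>\<^sup>+ j. ennreal L * indicator S j \<partial>p) + (\<integral>\<^sup>+ j. (\<Sum>i. ennreal c * indicator (T i) j) \<partial>p)"
      by (rule nn_integral_add) simp_all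
    have b: "(\<integral>\<^sup>+ j. (\<Sum>i. ennreal c * indicator (T i) j) \<partial>p) = (\<Sum>i. \<integral>\<^sup>+ j. ennreal c * indicator (T i) j \<partial>p)"
      by (rule nn_integral_suminf) simp
    have c: "(\<Sum>i. \<integral>\<^sup>+ j. ennreal c * indicator (T i) j \<partial>p) = (\<Sum>i. ennreal c * emeasure p (T i))"
      by (rule arg_cong[where f=suminf]) (simp add: fun_eq_iff nn_integral_cmult_indicator)
    have d: "(\<integral>\<^sup>+ j. ennreal L * indicator S j \<partial>p) = ennreal L * emeasure p S"
      by (simp add: nn_integral_cmult_indicator)
    show ?thesis using a b c d by simp
  qed
  also have "\<dots> \<le> ennreal (L * measure_pmf.prob p S + c * k / (k - 1) * Fb t)"
  proof -
    have s1: "ennreal L * emeasure p S = ennreal (L * measure_pmf.prob p S)"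
      using Lp by (simp add: measure_pmf.emeasure_eq_measure ennreal_mult)
    have "(\<Sum>i. ennreal c * emeasure p (T i)) \<le> (\<Sum>i. ennreal (c * Fb t * (1 / k) ^ i))"
    proof (intro suminf_le summableI)
      fix i
      have "measure_pmf.prob p (T i) \<le> Fb (t * l ^ i)" using tail by (simp add: T_def)
      also have "\<dots> \<le> Fb t * (1 / k) ^ i" by (rule geo)
      finally have "c * measure_pmf.prob p (T i) \<le> c * Fb t * (1 / k) ^ i"
        using cp by (simp add: mult.assoc)
      thus "ennreal c * emeasure p (T i) \<le> ennreal (c * Fb t * (1 / k) ^ i)"
        using cp by (simp add: measure_pmf.emeasure_eq_measure ennreal_mult[symmetric] ennreal_leI)
    qed
    also have "\<dots> = ennreal (\<Sum>i. c * Fb t * (1 / k) ^ i)"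
      using cp Fbt k by (intro suminf_ennreal2) (auto intro!: summable_mult summable_geometric)
    also have "(\<Sum>i. c * Fb t * (1 / k) ^ i) = c * k / (k - 1) * Fb t"
    proof -
      have "(\<Sum>i. c * Fb t * (1 / k) ^ i) = c * Fb t * (\<Sum>i. (1 / k) ^ i)"
        using k by (intro suminf_mult summable_geometric) auto
      also have "(\<Sum>i. (1 / k) ^ i) = 1 / (1 - 1 / k)" using k by (intro suminf_geometric) auto
      finally show ?thesis using k by (simp add: field_simps)
    qed
    finally have s2: "(\<Sum>i. ennreal c * emeasure p (T i)) \<le> ennreal (c * k / (k - 1) * Fb t)" .
    have "ennreal (L * measure_pmf.prob p S + c * k / (k - 1) * Fb t)
        = ennreal (L * measure_pmf.prob p S) + ennreal (c * k / (k - 1) * Fb t)"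
      using Lp cp k Fbt by (intro ennreal_plus) auto
    thus ?thesis using s1 s2 by (simp add: add_left_mono)
  qed
  finally have I: "(\<integral>\<^sup>+ j. ennreal (g j) \<partial>p) \<le> ennreal (L * measure_pmf.prob p S + c * k / (k - 1) * Fb t)" .
  have R0: "L * measure_pmf.prob p S + c * k / (k - 1) * Fb t \<ge> 0"
    using Lp cp k Fbt by (intro add_nonneg_nonneg mult_nonneg_nonneg) auto
  have int: "integrable (measure_pmf p) g"
  proof (rule integrableI_bounded)
    show "g \<in> borel_measurable (measure_pmf p)" by simp
    have "(\<integral>\<^sup>+ j. ennreal (norm (g j)) \<partial>p) = (\<integral>\<^sup>+ j. ennreal (g j) \<partial>p)"
      using gnn by simp
    also have "\<dots> < \<infinity>" using I by (simp add: le_less_trans)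
    finally show "(\<integral>\<^sup>+ j. ennreal (norm (g j)) \<partial>p) < \<infinity>" .
  qed
  have "measure_pmf.expectation p g = enn2real (\<integral>\<^sup>+ j. ennreal (g j) \<partial>p)"
    using gnn by (intro integral_eq_nn_integral) auto
  also have "\<dots> \<le> L * measure_pmf.prob p S + c * k / (k - 1) * Fb t"
    by (rule enn2real_leI[OF R0 I])
  finally show ?thesis using int by (simp add: L_def c_def S_def mult.commute)
qed



lemma const_bound:
  fixes \<gamma> \<epsilon> :: real
  assumes g: "\<gamma> \<ge> 0" and e: "\<epsilon> > 0"
  defines "k \<equiv> 1 + \<epsilon> * ln 2 / (2 * \<gamma> + 2)"
  defines "\<eta> \<equiv> \<epsilon> * ln 2 * (k - 1) / (2 * k)"
  defines "l \<equiv> k powr \<gamma> * (1 + \<eta>)"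
  shows "k > 1" "\<eta> > 0" "l > k powr \<gamma>" "l > 1" "log 2 l * k / (k - 1) \<le> \<gamma> / ln 2 + \<epsilon>"
proof -
  have l2: "ln 2 > (0::real)" by simp
  have d: "2 * \<gamma> + 2 > 0" using g by simp
  have km1: "k - 1 = \<epsilon> * ln 2 / (2 * \<gamma> + 2)" by (simp add: k_def)
  have kp: "k - 1 > 0" unfolding km1 using e l2 d by simp
  show k1: "k > 1" using kp by simp
  have ep: "\<eta> > 0" unfolding \<eta>_def using e l2 kp k1 by simp
  show "\<eta> > 0" by (rule ep)
  have kg: "k powr \<gamma> \<ge> 1" using k1 g by (simp add: ge_one_powr_ge_zero)
  have m: "k powr \<gamma> * 1 < k powr \<gamma> * (1 + \<eta>)" using ep kg by (intro mult_strict_left_mono) auto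
  show "l > k powr \<gamma>" using m by (simp add: l_def)
  thus "l > 1" using kg by simp
  have lnl: "ln l = \<gamma> * ln k + ln (1 + \<eta>)"
    using k1 ep by (simp add: l_def ln_mult ln_powr)
  have "ln k \<le> k - 1" using k1 by (intro ln_le_minus_one) simp
  hence "\<gamma> * ln k \<le> \<gamma> * (k - 1)" using g by (intro mult_left_mono) auto
  moreover have "ln (1 + \<eta>) \<le> \<eta>" using ep by (intro ln_add_one_self_le_self) simp
  ultimately have lnl_le: "ln l \<le> \<gamma> * (k - 1) + \<eta>" using lnl by simp
  have "ln l * k / (k - 1) \<le> (\<gamma> * (k - 1) + \<eta>) * k / (k - 1)"
    using lnl_le k1 kp by (intro divide_right_mono mult_right_mono) auto
  also have "\<dots> = \<gamma> * k + \<eta> * k / (k - 1)" using kp by (simp add: field_simps)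
  also have "\<eta> * k / (k - 1) = \<epsilon> * ln 2 / 2" using kp k1 by (simp add: \<eta>_def field_simps)
  also have "\<gamma> * k = \<gamma> + \<gamma> * (k - 1)" by (simp add: algebra_simps)
  also have "\<gamma> * (k - 1) \<le> \<epsilon> * ln 2 / 2"
  proof -
    have "\<gamma> * (k - 1) = (\<epsilon> * ln 2 / 2) * (2 * \<gamma> / (2 * \<gamma> + 2))" unfolding km1 using d by (simp add: field_simps)
    also have "\<dots> \<le> (\<epsilon> * ln 2 / 2) * 1" using d g e l2 by (intro mult_left_mono) auto
    finally show ?thesis by simp
  qed
  finally have "ln l * k / (k - 1) \<le> \<gamma> + \<epsilon> * ln 2" by simp
  hence "ln l * k / (k - 1) / ln 2 \<le> (\<gamma> + \<epsilon> * ln 2) / ln 2" using l2 by (intro divide_right_mono) auto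
  thus "log 2 l * k / (k - 1) \<le> \<gamma> / ln 2 + \<epsilon>" using l2 by (simp add: log_def field_simps)
qed


theorem lemma3:
  fixes F :: "real \<Rightarrow> real" and \<gamma> :: real
  assumes "smoothed_envelope F" and "MDA F \<gamma>" and "\<gamma> \<ge> 0"
    and "\<forall>x. F x < 1"
  shows "\<forall>\<epsilon>>0. \<exists>t0. \<forall>p :: nat pmf.
           (set_pmf p \<subseteq> {0<..} \<and>
            (\<forall>x::real. measure_pmf.prob p {k. real k > x} \<le> 1 - F x)) \<longrightarrow>
           (\<forall>t>t0. \<forall>u\<ge>(1::real).
              integrable (measure_pmf p) (\<lambda>k. if real k > u then log 2 (1 + real k - u) else 0) \<and>
              measure_pmf.expectation p (\<lambda>k. if real k > u then log 2 (1 + real k - u) else 0)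
                \<le> measure_pmf.prob p {k. real k > u} * log 2 t + (\<gamma> / ln 2 + \<epsilon>) * (1 - F t))"
proof (intro allI impI)
  fix \<epsilon> :: real assume e: "\<epsilon> > 0"
  have g: "\<gamma> \<ge> 0" by (rule assms(3))
  interpret env F
    using assms(1,4) unfolding smoothed_envelope_def by unfold_locales auto
  obtain A :: "nat \<Rightarrow> real" where Apos: "\<And>n. A n > 0"
    and limA: "\<And>x. 1 + \<gamma> * x > 0 \<Longrightarrow> (\<lambda>n. F (A n * x + tailinv F (real n)) ^ n) \<longlonglongrightarrow> gev \<gamma> x"
    using assms(2) unfolding MDA_def by blast
  define k where "k = 1 + \<epsilon> * ln 2 / (2 * \<gamma> + 2)"
  define \<eta> where "\<eta> = \<epsilon> * ln 2 * (k - 1) / (2 * k)"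
  define l where "l = k powr \<gamma> * (1 + \<eta>)"
  note cb = const_bound[OF g e, folded k_def, folded \<eta>_def, folded l_def]
  have k1: "k > 1" by (rule cb(1))
  have l1: "l > 1" by (rule cb(4))
  obtain x1 where x1: "x1 > 0" and hk: "k * hh \<gamma> (l * x1) < hh \<gamma> x1"
    using hk_exists[OF g k1 l1 cb(3)] by blast
  have ev: "eventually (\<lambda>r. tailinv F (r * k) \<le> l * tailinv F r) at_top"
    by (rule U_ratio[OF limA Apos g k1 x1 _ hk]) (use l1 in simp_all)
  obtain s0 where s0: "\<And>s. s \<ge> s0 \<Longrightarrow> k * (1 - F (l * s)) \<le> 1 - F s"
    using tail_ratio[OF ev _ _] k1 l1 by auto
  show "\<exists>t0. \<forall>p :: nat pmf.
           (set_pmf p \<subseteq> {0<..} \<and>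
            (\<forall>x::real. measure_pmf.prob p {k. real k > x} \<le> 1 - F x)) \<longrightarrow>
           (\<forall>t>t0. \<forall>u\<ge>(1::real).
              integrable (measure_pmf p) (\<lambda>k. if real k > u then log 2 (1 + real k - u) else 0) \<and>
              measure_pmf.expectation p (\<lambda>k. if real k > u then log 2 (1 + real k - u) else 0)
                \<le> measure_pmf.prob p {k. real k > u} * log 2 t + (\<gamma> / ln 2 + \<epsilon>) * (1 - F t))"
  proof (intro exI[of _ "max s0 1"] allI impI)
    fix p :: "nat pmf" and t u :: real
    assume hp: "set_pmf p \<subseteq> {0<..} \<and> (\<forall>x::real. measure_pmf.prob p {k. real k > x} \<le> 1 - F x)"
      and ht: "t > max s0 1" and hu: "u \<ge> 1"
    have t1: "t > 1" and ts0: "t \<ge> s0" using ht by auto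
    have geo: "1 - F (t * l ^ i) \<le> (1 - F t) * (1 / k) ^ i" for i
    proof (induction i)
      case 0 thus ?case by simp
    next
      case (Suc i)
      have "t * 1 \<le> t * l ^ i" using t1 l1 by (intro mult_left_mono one_le_power) auto
      hence "t * l ^ i \<ge> s0" using ts0 by simp
      hence "k * (1 - F (l * (t * l ^ i))) \<le> 1 - F (t * l ^ i)" by (rule s0)
      also have "\<dots> \<le> (1 - F t) * (1 / k) ^ i" by (rule Suc.IH)
      finally have "1 - F (l * (t * l ^ i)) \<le> (1 - F t) * (1 / k) ^ i / k"
        using k1 by (simp add: field_simps)
      thus ?case by (simp add: algebra_simps)
    qed
    note eb = expect_bound[of p "\<lambda>x. 1 - F x", OF _ t1 hu l1 k1 geo]
    have F1: "1 - F t \<ge> 0" using lt1[of t] by simp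
    have "(log 2 l * k / (k - 1)) * (1 - F t) \<le> (\<gamma> / ln 2 + \<epsilon>) * (1 - F t)"
      by (rule mult_right_mono[OF cb(5) F1])
    thus "integrable (measure_pmf p) (\<lambda>k. if real k > u then log 2 (1 + real k - u) else 0) \<and>
              measure_pmf.expectation p (\<lambda>k. if real k > u then log 2 (1 + real k - u) else 0)
                \<le> measure_pmf.prob p {k. real k > u} * log 2 t + (\<gamma> / ln 2 + \<epsilon>) * (1 - F t)"
      using eb hp by auto
  qed
qed

end
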